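(* Let $(X,c)$ be a finite metric space, let $k\ge 1$, let $M\subseteq X$ with $|M| = k$, and let $R\subseteq X$ with $|R| = j > k$. Then $$\min_{r\in R}\ \mathrm{cost}(R\setminus\{r\}) - \mathrm{cost}(R) \;\le\; \frac{2}{j-k}\,\mathrm{cost}(M).$$ In particular, if $R_j$ and $R_{j-1}$ are consecutive sets produced by the Reverse Greedy algorithm, with $j>k$, then $\mathrm{cost}(R_{j-1})-\mathrm{cost}(R_j) \le \frac{2}{j-k}\,\mathrm{cost}(M)$.
   Context: For $x\in X$ and nonempty $F\subseteq X$, $c_{xF}=\min_{f\in F}c_{xf}$, and $\mathrm{cost}(F)=\sum_{x\in X} c_{xF}$. The Reverse Greedy algorithm on an $n$-point space $X$: set $R_n = X$; for $t = n, n-1,\dots,2$, set $R_{t-1} = R_t\setminus\{r_t\}$ where $r_t\in R_t$ is chosen (ties broken arbitrarily) to minimize $\mathrm{cost}(R_{t-1})$. *)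

theory Defs
  imports Main "HOL-Library.Multiset" Complex_Main
begin

definition finite_metric_space :: "'a set \<Rightarrow> ('a \<Rightarrow> 'a \<Rightarrow> real) \<Rightarrow> bool" where
  "finite_metric_space X c \<longleftrightarrow> finite X \<and>
     (\<forall>x\<in>X. \<forall>y\<in>X. 0 \<le> c x y) \<and>
     (\<forall>x\<in>X. \<forall>y\<in>X. c x y = 0 \<longleftrightarrow> x = y) \<and>
     (\<forall>x\<in>X. \<forall>y\<in>X. c x y = c y x) \<and>
     (\<forall>x\<in>X. \<forall>y\<in>X. \<forall>z\<in>X. c x z \<le> c x y + c y z)"

definition dist_to_set :: "('a \<Rightarrow> 'a \<Rightarrow> real) \<Rightarrow> 'a \<Rightarrow> 'a set \<Rightarrow> real" where
  "dist_to_set c x F = Min ((\<lambda>f. c x f) ` F)"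

definition cost :: "'a set \<Rightarrow> ('a \<Rightarrow> 'a \<Rightarrow> real) \<Rightarrow> 'a set \<Rightarrow> real" where
  "cost X c F = (\<Sum>x\<in>X. dist_to_set c x F)"

end

theory Submission
  imports Defs
begin

lemma dts_le:
  assumes "finite F" "f \<in> F"
  shows "dist_to_set c x F \<le> c x f"
  using assms unfolding dist_to_set_def by (intro Min_le) auto

lemma dts_in:
  assumes "finite F" "F \<noteq> {}"
  shows "\<exists>f\<in>F. dist_to_set c x F = c x f"
proof -
  have "Min ((\<lambda>f. c x f) ` F) \<in> (\<lambda>f. c x f) ` F"
    using assms by (intro Min_in) auto
  then show ?thesis unfolding dist_to_set_def by auto
qed

theorem mainTheorem3:
  fixes X :: "'a set" and c :: "'a \<Rightarrow> 'a \<Rightarrow> real" and M R :: "'a set" and k j :: nat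
  assumes "finite_metric_space X c"
    and "k \<ge> 1"
    and "M \<subseteq> X" and "card M = k"
    and "R \<subseteq> X" and "card R = j" and "j > k"
  shows "(MIN r\<in>R. cost X c (R - {r})) - cost X c R \<le> 2 / (real j - real k) * cost X c M"
proof -
  note fm = assms(1)[unfolded finite_metric_space_def]
  have fX: "finite X" using fm by blast
  have fR: "finite R" using assms(5) fX finite_subset by blast
  have fM: "finite M" using assms(3) fX finite_subset by blast
  have Rne: "R \<noteq> {}" using assms(6,7) by auto
  have Mne: "M \<noteq> {}" using assms(2,4) by auto
  define a where "a x = (SOME r. r \<in> R \<and> dist_to_set c x R = c x r)" for x
  define mm where "mm x = (SOME m. m \<in> M \<and> dist_to_set c x M = c x m)" for x
  have a: "a x \<in> R \<and> dist_to_set c x R = c x (a x)" for x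
    unfolding a_def using dts_in[OF fR Rne, of c x] by (metis (mono_tags, lifting) someI_ex)
  have mmp: "mm x \<in> M \<and> dist_to_set c x M = c x (mm x)" for x
    unfolding mm_def using dts_in[OF fM Mne, of c x] by (metis (mono_tags, lifting) someI_ex)
  define R' where "R' = R - a ` M"
  have fR': "finite R'" using fR R'_def by auto
  have cardam: "card (a ` M) \<le> k" using card_image_le[OF fM, of a] assms(4) by simp
  have "card R - card (a ` M) \<le> card R'"
    unfolding R'_def by (rule diff_card_le_card_Diff) (use fM in auto)
  hence cR': "real j - real k \<le> real (card R')" using cardam assms(6,7) by linarith
  have R'pos: "card R' > 0" using cR' assms(7) by linarith
  define h where "h x = 2 * dist_to_set c x M" for x
  have key: "dist_to_set c x (R - {r}) \<le> dist_to_set c x R + (if a x = r then h x else 0)"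
    if r: "r \<in> R'" and x: "x \<in> X" for x r
  proof (cases "a x = r")
    case False
    have "dist_to_set c x (R - {r}) \<le> c x (a x)" using a[of x] False fR by (intro dts_le) auto
    then show ?thesis using a[of x] False by simp
  next
    case True
    define m where "m = mm x"
    have mM: "m \<in> M" and dm: "dist_to_set c x M = c x m" using mmp[of x] m_def by auto
    have mX: "m \<in> X" using mM assms(3) by auto
    have rR: "r \<in> R" using r R'_def by auto
    have rX: "r \<in> X" using rR assms(5) by auto
    have amR: "a m \<in> R" using a by auto
    have amX: "a m \<in> X" using amR assms(5) by auto
    have amr: "a m \<noteq> r" using r mM R'_def by auto
    have "dist_to_set c x (R - {r}) \<le> c x (a m)" using amR amr fR by (intro dts_le) auto
    also have "\<dots> \<le> c x m + c m (a m)" using fm x mX amX by blast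
    also have "c m (a m) \<le> c m r" using a[of m] dts_le[OF fR rR, of c m] by simp
    also have "c m r \<le> c m x + c x r" using fm x mX rX by blast
    also have "c m x = c x m" using fm x mX by blast
    finally show ?thesis using True a[of x] dm h_def by simp
  qed
  define g where "g r = cost X c (R - {r}) - cost X c R" for r
  have gle: "g r \<le> (\<Sum>x\<in>X. if a x = r then h x else 0)" if "r \<in> R'" for r
  proof -
    have "cost X c (R - {r}) \<le> (\<Sum>x\<in>X. dist_to_set c x R + (if a x = r then h x else 0))"
      unfolding cost_def by (intro sum_mono key that)
    then show ?thesis unfolding g_def cost_def by (simp add: sum.distrib)
  qed
  have hnn: "h x \<ge> 0" if "x \<in> X" for x
  proof -
    have "mm x \<in> X" using mmp assms(3) by auto
    then show ?thesis using mmp[of x] fm that h_def by auto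
  qed
  have "(\<Sum>r\<in>R'. g r) \<le> (\<Sum>r\<in>R'. \<Sum>x\<in>X. if a x = r then h x else 0)"
    by (intro sum_mono gle)
  also have "\<dots> = (\<Sum>x\<in>X. \<Sum>r\<in>R'. if a x = r then h x else 0)" by (rule sum.swap)
  also have "\<dots> = (\<Sum>x\<in>X. if a x \<in> R' then h x else 0)"
    using fR' by (simp add: sum.delta)
  also have "\<dots> \<le> (\<Sum>x\<in>X. h x)" by (intro sum_mono) (auto simp: hnn)
  also have "\<dots> = 2 * cost X c M" unfolding h_def cost_def by (simp add: sum_distrib_left)
  finally have sumg: "(\<Sum>r\<in>R'. g r) \<le> 2 * cost X c M" .
  have R'ne: "R' \<noteq> {}" using R'pos by auto
  have "Min (g ` R') \<in> g ` R'" using fR' R'ne by (intro Min_in) auto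
  then obtain r0 where r0R: "r0 \<in> R'" and r0m: "g r0 = Min (g ` R')" by auto
  have r0: "g r0 \<le> g r" if "r \<in> R'" for r using r0m fR' that by simp
  have Cnn: "cost X c M \<ge> 0" unfolding cost_def h_def[symmetric]
    using hnn h_def by (auto intro: sum_nonneg)
  have "real (card R') * g r0 = (\<Sum>r\<in>R'. g r0)" by simp
  also have "\<dots> \<le> (\<Sum>r\<in>R'. g r)" by (intro sum_mono r0)
  finally have "real (card R') * g r0 \<le> 2 * cost X c M" using sumg by linarith
  hence g0: "g r0 \<le> 2 * cost X c M / real (card R')" using R'pos by (simp add: field_simps)
  have jk: "real j - real k > 0" using assms(7) by simp
  have "2 * cost X c M / real (card R') \<le> 2 * cost X c M / (real j - real k)"
    using Cnn cR' jk by (intro divide_left_mono) auto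
  with g0 have g1: "g r0 \<le> 2 / (real j - real k) * cost X c M" by simp
  have r0R': "r0 \<in> R" using r0R R'_def by auto
  have "(MIN r\<in>R. cost X c (R - {r})) \<le> cost X c (R - {r0})"
    using fR r0R' by (intro Min_le) auto
  then show ?thesis using g1 g_def by simp
qed

end
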